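(* Let $m\ge2$ and let $\mathbb N$ be the directed cycle $1\to2\to\cdots\to m\to1$, where agent $i$ receives $C_ix_{i-1}$ from agent $i-1$ (vertex $0$ being vertex $m$, $x_0:=x_m$), each $C_i$ a real full-row-rank matrix with $n$ columns, and $P_i=C_i'(C_iC_i')^{-1}C_i$. Assume $\bar{\mathbb N}$ is well-configured, i.e. for all $x_1,\dots,x_m\in\mathbb R^n$, $C_ix_i=C_ix_{i-1}$ for all $i$ implies $x_1=\cdots=x_m$. Then for arbitrary initial states $x_i(0)\in\mathbb R^n$, the iteration $$x_i(t+1)=x_i(t)-\tfrac12P_i\big(x_i(t)-x_{i-1}(t)\big),\qquad i=1,\dots,m,$$ makes all $x_i(t)$ converge to a common vector $x^*\in\mathbb R^n$ exponentially fast.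
   Context: $'$ denotes transpose; $P_i$ is the orthogonal projection onto $(\ker C_i)^\perp$. Exponentially fast: there exist $c>0$, $\rho\in[0,1)$ with $\|x_i(t)-x^*\|\le c\rho^t$ for all $i,t$. *)

theory Defs
  imports "Jordan_Normal_Form.DL_Rank" "Jordan_Normal_Form.Gauss_Jordan_Elimination"
begin

definition cyc_prev :: "nat \<Rightarrow> nat \<Rightarrow> nat" where
  "cyc_prev m i = (if i = 1 then m else i - 1)"

definition proj_mat :: "real mat \<Rightarrow> real mat" where
  "proj_mat C = transpose_mat C * the (mat_inverse (C * transpose_mat C)) * C"

definition vnorm :: "real vec \<Rightarrow> real" where
  "vnorm v = sqrt (v \<bullet> v)"

definition full_row_rank :: "real mat \<Rightarrow> bool" where
  "full_row_rank C = (vec_space.rank (dim_row C) C = dim_row C)"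

definition well_configured :: "nat \<Rightarrow> nat \<Rightarrow> (nat \<Rightarrow> real mat) \<Rightarrow> bool" where
  "well_configured n m C = (\<forall>xs :: nat \<Rightarrow> real vec.
      (\<forall>i\<in>{1..m}. xs i \<in> carrier_vec n) \<longrightarrow>
      (\<forall>i\<in>{1..m}. C i *\<^sub>v xs i = C i *\<^sub>v xs (cyc_prev m i)) \<longrightarrow>
      (\<forall>i\<in>{1..m}. \<forall>j\<in>{1..m}. xs i = xs j))"

end

theory Submission
  imports Defs "HOL-Analysis.Elementary_Metric_Spaces"
begin


lemma sp_self_ge0: "(v::real vec) \<bullet> v \<ge> 0"
  unfolding scalar_prod_def by (auto intro: sum_nonneg)

lemma sp_self_eq0: assumes "(v::real vec) \<bullet> v = 0" shows "v = 0\<^sub>v (dim_vec v)"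
proof (rule eq_vecI)
  have "(\<Sum>i\<in>{0..<dim_vec v}. v $ i * v $ i) = 0" using assms unfolding scalar_prod_def by simp
  hence "\<forall>i\<in>{0..<dim_vec v}. v $ i * v $ i = 0" by (subst (asm) sum_nonneg_eq_0_iff) auto
  thus "\<And>i. i < dim_vec (0\<^sub>v (dim_vec v)) \<Longrightarrow> v $ i = 0\<^sub>v (dim_vec v) $ i" by auto
qed auto

context vec_space begin
lemma rank_full_transpose_inj:
  assumes C: "C \<in> carrier_mat n nc" and r: "rank C = n" and v: "v \<in> carrier_vec n"
    and z: "C\<^sup>T *\<^sub>v v = 0\<^sub>v nc"
  shows "v = 0\<^sub>v n"
proof -
  obtain S where S: "maximal S (\<lambda>T. T \<subseteq> set (cols C) \<and> lin_indpt T)"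
    using maximal_exists[of "(\<lambda>T. T \<subseteq> set (cols C) \<and> lin_indpt T)" "card (set (cols C))" "{}"]
    by (meson List.finite_set card_mono empty_iff empty_subsetI finite_lin_indpt2 rev_finite_subset)
  have cardS: "card S = n" using rank_card_indpt[OF C S] r by simp
  have Ssub: "S \<subseteq> set (cols C)" and Sli: "lin_indpt S" using S unfolding maximal_def by auto
  have finS: "finite S" using Ssub finite_subset by blast
  obtain xs where xs: "set xs = S" "distinct xs" using finite_distinct_list[OF finS] by blast
  have len: "length xs = n" using xs cardS distinct_card by fastforce
  have xsc: "set xs \<subseteq> carrier_vec n" using xs Ssub cols_dim C by blast
  define A where "A = mat_of_cols n xs"
  have A: "A \<in> carrier_mat n n" unfolding A_def using len by auto
  have colsA: "cols A = xs" unfolding A_def using xsc by (simp add: cols_mat_of_cols)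
  have "rank A = n" using lin_indpt_full_rank[OF A] colsA xs Sli by simp
  hence "det A \<noteq> 0" using det_rank_iff[OF A] by simp
  hence dAT: "det A\<^sup>T \<noteq> 0" using det_transpose[OF A] by simp
  have "A\<^sup>T *\<^sub>v v = 0\<^sub>v n"
  proof (rule eq_vecI)
    fix j assume "j < dim_vec (0\<^sub>v n)"
    hence j: "j < n" by simp
    obtain l where l: "l < nc" "xs ! j = col C l"
      using nth_mem[of j xs] j len xs Ssub C
      by (metis (no_types, lifting) carrier_matD(2) cols_length cols_nth in_set_conv_nth subsetD)
    have "(A\<^sup>T *\<^sub>v v) $ j = col A j \<bullet> v" using j A by simp
    also have "col A j = xs ! j" using colsA j len A by (metis cols_nth carrier_matD(2))
    also have "xs ! j = col C l" by (rule l(2))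
    also have "col C l \<bullet> v = (C\<^sup>T *\<^sub>v v) $ l" using l C by simp
    also have "\<dots> = 0" using z l by simp
    finally show "(A\<^sup>T *\<^sub>v v) $ j = 0\<^sub>v n $ j" using j l by simp
  qed (use A in simp)
  moreover have "A\<^sup>T \<in> carrier_mat n n" using A by simp
  ultimately show ?thesis using det_0_iff_vec_prod_zero_field[of "A\<^sup>T" n] dAT v by blast
qed
end


lemma proj_facts:
  assumes C: "C \<in> carrier_mat k n" and fr: "full_row_rank C"
  shows "proj_mat C \<in> carrier_mat n n \<and> proj_mat C * proj_mat C = proj_mat C \<and>
         (proj_mat C)\<^sup>T = proj_mat C \<and> C * proj_mat C = C"
proof -
  define M where "M = C * C\<^sup>T"
  have M: "M \<in> carrier_mat k k" unfolding M_def using C by simp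
  have CT: "C\<^sup>T \<in> carrier_mat n k" using C by simp
  have rk: "vec_space.rank k C = k" using fr C unfolding full_row_rank_def by simp
  have inj: "v = 0\<^sub>v k" if v: "v \<in> carrier_vec k" and Mv: "M *\<^sub>v v = 0\<^sub>v k" for v
  proof -
    have w: "C\<^sup>T *\<^sub>v v \<in> carrier_vec n" using CT v by simp
    have "(C\<^sup>T *\<^sub>v v) \<bullet> (C\<^sup>T *\<^sub>v v) = v \<bullet> (C *\<^sub>v (C\<^sup>T *\<^sub>v v))"
      using transpose_vec_mult_scalar[OF C w v] .
    also have "C *\<^sub>v (C\<^sup>T *\<^sub>v v) = M *\<^sub>v v" unfolding M_def using C CT v
      by (simp add: assoc_mult_mat_vec)
    finally have "(C\<^sup>T *\<^sub>v v) \<bullet> (C\<^sup>T *\<^sub>v v) = 0" using Mv v by simp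
    hence "C\<^sup>T *\<^sub>v v = 0\<^sub>v n" using sp_self_eq0[of "C\<^sup>T *\<^sub>v v"] w C by (simp add: carrier_vecD)
    thus ?thesis using vec_space.rank_full_transpose_inj[OF C rk v] by simp
  qed
  have "det M \<noteq> 0" using det_0_iff_vec_prod_zero_field[OF M] inj by blast
  hence "mat_inverse M \<noteq> None" using mat_inverse(1)[OF M, where b="()"] det_non_zero_imp_unit[OF M, where b="()"] by blast
  then obtain B where "mat_inverse M = Some B" by blast
  hence MB: "M * B = 1\<^sub>m k" and BM: "B * M = 1\<^sub>m k" and B: "B \<in> carrier_mat k k"
    using mat_inverse(2)[OF M] by auto
  have P: "proj_mat C = C\<^sup>T * B * C"
    unfolding proj_mat_def M_def[symmetric] using \<open>mat_inverse M = Some B\<close> by simp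
  have MT: "M\<^sup>T = M" unfolding M_def using C by (simp add: transpose_mult)
  have BT: "B\<^sup>T = B"
  proof -
    have "B\<^sup>T * M = (M\<^sup>T * B)\<^sup>T" using B M by (simp add: transpose_mult)
    also have "\<dots> = 1\<^sub>m k" using MT MB by simp
    finally have e: "B\<^sup>T * M = 1\<^sub>m k" .
    have "B\<^sup>T = B\<^sup>T * (M * B)" using MB B by simp
    also have "\<dots> = (B\<^sup>T * M) * B" using B M by (simp add: assoc_mult_mat)
    finally show ?thesis using e B by simp
  qed
  have Pc: "proj_mat C \<in> carrier_mat n n" unfolding P using B C by simp
  have CB: "C\<^sup>T * B \<in> carrier_mat n k" using CT B by simp
  have BC: "B * C \<in> carrier_mat k n" using C B by simp
  have CP: "C * proj_mat C = C"
  proof -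
    have "C * proj_mat C = C * (C\<^sup>T * (B * C))" unfolding P using assoc_mult_mat[OF CT B C] by simp
    also have "\<dots> = M * (B * C)" unfolding M_def using assoc_mult_mat[OF C CT BC] by simp
    also have "\<dots> = (M * B) * C" using assoc_mult_mat[OF M B C] by simp
    also have "\<dots> = C" using MB C by simp
    finally show ?thesis .
  qed
  have PP: "proj_mat C * proj_mat C = proj_mat C"
  proof -
    have "proj_mat C * proj_mat C = (C\<^sup>T * B) * (C * proj_mat C)"
      unfolding P using assoc_mult_mat[OF CB C Pc[unfolded P]] by simp
    thus ?thesis using CP P by simp
  qed
  have PT: "(proj_mat C)\<^sup>T = proj_mat C"
  proof -
    have "(C\<^sup>T * B * C)\<^sup>T = C\<^sup>T * (C\<^sup>T * B)\<^sup>T" using CB C by (simp add: transpose_mult)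
    also have "(C\<^sup>T * B)\<^sup>T = B * C" using CT B BT by (simp add: transpose_mult)
    also have "C\<^sup>T * (B * C) = C\<^sup>T * B * C" using assoc_mult_mat[OF CT B C] by simp
    finally show ?thesis unfolding P .
  qed
  show ?thesis using Pc PP PT CP by blast
qed


lemma sp_sum: "v \<in> carrier_vec n \<Longrightarrow> u \<bullet> v = (\<Sum>j<n. u $ j * v $ j)"
  unfolding scalar_prod_def by (simp add: atLeast0LessThan)

lemma sp_add_add: assumes "u \<in> carrier_vec n" "v \<in> carrier_vec n"
  shows "(u + v) \<bullet> (u + v) = u \<bullet> u + 2 * (u \<bullet> v) + v \<bullet> (v::real vec)"
  using assms add_carrier_vec[OF assms] unfolding scalar_prod_def by (simp add: sum.distrib sum_distrib_left algebra_simps)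

lemma sp_diff_diff: assumes "u \<in> carrier_vec n" "v \<in> carrier_vec n"
  shows "(u - v) \<bullet> (u - v) = u \<bullet> u - 2 * (u \<bullet> v) + v \<bullet> (v::real vec)"
  using assms minus_carrier_vec[of u n v] unfolding scalar_prod_def by (simp add: sum.distrib sum_distrib_left sum_subtractf algebra_simps)

lemma sp_smult_smult: assumes "u \<in> carrier_vec n"
  shows "(c \<cdot>\<^sub>v u) \<bullet> (c \<cdot>\<^sub>v u) = c^2 * (u \<bullet> (u::real vec))"
  using assms unfolding scalar_prod_def by (simp add: sum_distrib_left algebra_simps power2_eq_square)

lemma sp_comm: assumes "u \<in> carrier_vec n" "v \<in> carrier_vec n"
  shows "u \<bullet> v = v \<bullet> (u::real vec)"
  using assms by (simp add: sp_sum mult.commute)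

lemma sym_proj_move: assumes P: "P \<in> carrier_mat n n" and PT: "P\<^sup>T = P"
  and a: "a \<in> carrier_vec n" and b: "b \<in> carrier_vec n"
  shows "(P *\<^sub>v a) \<bullet> b = a \<bullet> (P *\<^sub>v (b::real vec))"
proof -
  have "(P *\<^sub>v a) \<bullet> b = b \<bullet> (P *\<^sub>v a)" using sp_comm[of "P *\<^sub>v a" n b] P a b by simp
  also have "\<dots> = (P\<^sup>T *\<^sub>v b) \<bullet> a" using transpose_vec_mult_scalar[OF P a b] by simp
  also have "\<dots> = a \<bullet> (P *\<^sub>v b)" using PT sp_comm[of "P *\<^sub>v b" n a] P a b by simp
  finally show ?thesis .
qed

lemma proj_norm_le: assumes P: "P \<in> carrier_mat n n" and PT: "P\<^sup>T = P" and PP: "P * P = P"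
  and b: "b \<in> carrier_vec n"
  shows "(P *\<^sub>v b) \<bullet> (P *\<^sub>v b) \<le> b \<bullet> (b::real vec)"
proof -
  have Pb: "P *\<^sub>v b \<in> carrier_vec n" using P b by simp
  have PPb: "P *\<^sub>v (P *\<^sub>v b) = P *\<^sub>v b" using PP P b by (metis assoc_mult_mat_vec)
  have e1: "(P *\<^sub>v b) \<bullet> (P *\<^sub>v b) = b \<bullet> (P *\<^sub>v b)"
    using sym_proj_move[OF P PT b Pb] PPb by simp
  have "0 \<le> (b - P *\<^sub>v b) \<bullet> (b - P *\<^sub>v b)" by (rule sp_self_ge0)
  also have "\<dots> = b \<bullet> b - 2 * (b \<bullet> (P *\<^sub>v b)) + (P *\<^sub>v b) \<bullet> (P *\<^sub>v b)"
    using sp_diff_diff[OF b Pb] .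
  finally show ?thesis using e1 by simp
qed

lemma key_step: assumes P: "P \<in> carrier_mat n n" and PT: "P\<^sup>T = P" and PP: "P * P = P"
  and a: "a \<in> carrier_vec n" and b: "b \<in> carrier_vec n" and Pa: "P *\<^sub>v a = a"
  shows "((1/2) \<cdot>\<^sub>v (a + P *\<^sub>v b)) \<bullet> ((1/2) \<cdot>\<^sub>v (a + P *\<^sub>v b)) + (1/4) * ((a - b) \<bullet> (a - b))
    \<le> (1/2) * (a \<bullet> a) + (1/2) * (b \<bullet> (b::real vec))"
proof -
  have Pb: "P *\<^sub>v b \<in> carrier_vec n" using P b by simp
  have ab: "a + P *\<^sub>v b \<in> carrier_vec n" using a Pb by simp
  have d: "a \<bullet> (P *\<^sub>v b) = a \<bullet> b" using sym_proj_move[OF P PT a b] Pa by simp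
  have "((1/2) \<cdot>\<^sub>v (a + P *\<^sub>v b)) \<bullet> ((1/2) \<cdot>\<^sub>v (a + P *\<^sub>v b))
      = (1/4) * (a \<bullet> a + 2 * (a \<bullet> (P *\<^sub>v b)) + (P *\<^sub>v b) \<bullet> (P *\<^sub>v b))"
    using sp_smult_smult[OF ab, of "1/2"] sp_add_add[OF a Pb] by (simp add: power2_eq_square)
  moreover have "(a - b) \<bullet> (a - b) = a \<bullet> a - 2 * (a \<bullet> b) + b \<bullet> b" using sp_diff_diff[OF a b] .
  moreover have "(P *\<^sub>v b) \<bullet> (P *\<^sub>v b) \<le> b \<bullet> b" using proj_norm_le[OF P PT PP b] .
  ultimately show ?thesis using d by (simp add: field_simps)
qed





lemma cyc_prev_in: "m \<ge> 1 \<Longrightarrow> i \<in> {1..m} \<Longrightarrow> cyc_prev m i \<in> {1..m}"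
  unfolding cyc_prev_def by auto

lemma cyc_prev_bij: assumes "m \<ge> 1" shows "bij_betw (cyc_prev m) {1..m} {1..m}"
proof (rule bij_betw_byWitness[where f'="\<lambda>i. if i = m then 1 else Suc i"])
  show "\<forall>a\<in>{1..m}. (if cyc_prev m a = m then 1 else Suc (cyc_prev m a)) = a"
    using assms unfolding cyc_prev_def by auto
  show "\<forall>a'\<in>{1..m}. cyc_prev m (if a' = m then 1 else Suc a') = a'"
    using assms unfolding cyc_prev_def by auto
  show "cyc_prev m ` {1..m} \<subseteq> {1..m}" using cyc_prev_in assms by auto
  show "(\<lambda>i. if i = m then 1 else Suc i) ` {1..m} \<subseteq> {1..m}" using assms by auto
qed

lemma sum_cyc_prev: assumes "m \<ge> 1"
  shows "(\<Sum>i\<in>{1..m}. f (cyc_prev m i)) = (\<Sum>i\<in>{1..m}. f i)"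
  using sum.reindex_bij_betw[OF cyc_prev_bij[OF assms], of f] by simp

lemma cycle_const: assumes "\<forall>i\<in>{1..m}. d i = d (cyc_prev m i)"
  shows "\<forall>i\<in>{1..m}. d i = d 1"
proof -
  have "i \<le> m \<longrightarrow> 1 \<le> i \<longrightarrow> d i = d 1" for i
  proof (induction i)
    case (Suc i)
    show ?case
    proof (cases "i = 0")
      case False
      show ?thesis
      proof (intro impI)
        assume "Suc i \<le> m"
        hence "Suc i \<in> {1..m}" by simp
        hence "d (Suc i) = d (cyc_prev m (Suc i))" using assms by blast
        also have "cyc_prev m (Suc i) = i" using False unfolding cyc_prev_def by auto
        finally show "d (Suc i) = d 1" using Suc False \<open>Suc i \<le> m\<close> by auto
      qed
    qed simp
  qed simp
  thus ?thesis by (meson atLeastAtMost_iff)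
qed

definition EE :: "nat \<Rightarrow> (nat \<Rightarrow> real vec) \<Rightarrow> real" where
  "EE m d = (\<Sum>i\<in>{1..m}. d i \<bullet> d i)"

definition SS :: "nat \<Rightarrow> (nat \<Rightarrow> real vec) \<Rightarrow> real" where
  "SS m d = (\<Sum>i\<in>{1..m}. (d i - d (cyc_prev m i)) \<bullet> (d i - d (cyc_prev m i)))"

definition GG :: "nat \<Rightarrow> nat \<Rightarrow> (nat \<Rightarrow> real mat) \<Rightarrow> (nat \<Rightarrow> real vec) \<Rightarrow> bool" where
  "GG n m P d \<longleftrightarrow> (\<forall>i\<in>{1..m}. d i \<in> carrier_vec n \<and> P i *\<^sub>v d i = d i) \<and>
     (\<forall>c\<in>carrier_vec n. (\<forall>i\<in>{1..m}. P i *\<^sub>v c = c) \<longrightarrow> (\<Sum>i\<in>{1..m}. d i \<bullet> c) = 0)"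

lemma EE_ge0: "EE m d \<ge> 0" unfolding EE_def by (intro sum_nonneg sp_self_ge0)
lemma SS_ge0: "SS m d \<ge> 0" unfolding SS_def by (intro sum_nonneg sp_self_ge0)

lemma GG_zero: assumes m: "m \<ge> 1" and G: "GG n m P d" and S0: "SS m d = 0"
  shows "EE m d = 0"
proof -
  have car: "\<And>i. i \<in> {1..m} \<Longrightarrow> d i \<in> carrier_vec n" using G unfolding GG_def by auto
  have "\<forall>i\<in>{1..m}. (d i - d (cyc_prev m i)) \<bullet> (d i - d (cyc_prev m i)) = 0"
    using S0 unfolding SS_def by (subst (asm) sum_nonneg_eq_0_iff) (auto intro: sp_self_ge0)
  hence eq: "\<forall>i\<in>{1..m}. d i = d (cyc_prev m i)"
  proof (intro ballI)
    fix i assume h: "\<forall>i\<in>{1..m}. (d i - d (cyc_prev m i)) \<bullet> (d i - d (cyc_prev m i)) = 0"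
      and i: "i \<in> {1..m}"
    have ci: "d i \<in> carrier_vec n" "d (cyc_prev m i) \<in> carrier_vec n"
      using car i cyc_prev_in[OF m i] by auto
    have "d i - d (cyc_prev m i) = 0\<^sub>v n"
      using sp_self_eq0[of "d i - d (cyc_prev m i)"] h i ci by simp
    show "d i = d (cyc_prev m i)"
    proof (rule eq_vecI)
      fix j assume "j < dim_vec (d (cyc_prev m i))"
      hence "j < n" using ci by simp
      hence "(d i - d (cyc_prev m i)) $ j = 0" using \<open>d i - d (cyc_prev m i) = 0\<^sub>v n\<close> by simp
      thus "d i $ j = d (cyc_prev m i) $ j" using \<open>j < n\<close> ci by simp
    qed (use ci in simp)
  qed
  have const: "\<forall>i\<in>{1..m}. d i = d 1" using cycle_const[OF eq] .
  have 1: "1 \<in> {1..m}" using m by simp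
  have c: "d 1 \<in> carrier_vec n" using car 1 by simp
  have "\<forall>i\<in>{1..m}. P i *\<^sub>v d 1 = d 1" using G const unfolding GG_def by metis
  hence "(\<Sum>i\<in>{1..m}. d i \<bullet> d 1) = 0" using G c unfolding GG_def by blast
  moreover have "(\<Sum>i\<in>{1..m}. d i \<bullet> d i) = (\<Sum>i\<in>{1..m}. d i \<bullet> d 1)"
  proof (rule sum.cong)
    fix i assume "i \<in> {1..m}"
    hence "d i = d 1" using const by blast
    thus "d i \<bullet> d i = d i \<bullet> d 1" by simp
  qed simp
  ultimately have "(\<Sum>i\<in>{1..m}. d i \<bullet> d i) = 0" by simp
  thus ?thesis unfolding EE_def .
qed




lemma lim_lemmas:
  assumes m: "m \<ge> 1"
    and XC: "\<And>k i. i \<in> {1..m} \<Longrightarrow> X k i \<in> carrier_vec n"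
    and YC: "\<And>i. i \<in> {1..m} \<Longrightarrow> Y i \<in> carrier_vec n"
    and conv: "\<And>i j. i \<in> {1..m} \<Longrightarrow> j < n \<Longrightarrow> (\<lambda>k. X k i $ j) \<longlonglongrightarrow> Y i $ j"
  shows "(\<lambda>k. EE m (X k)) \<longlonglongrightarrow> EE m Y"
    and "(\<lambda>k. SS m (X k)) \<longlonglongrightarrow> SS m Y"
    and "\<And>c. c \<in> carrier_vec n \<Longrightarrow> (\<lambda>k. \<Sum>i\<in>{1..m}. X k i \<bullet> c) \<longlonglongrightarrow> (\<Sum>i\<in>{1..m}. Y i \<bullet> c)"
    and "\<And>A i j. A \<in> carrier_mat n n \<Longrightarrow> i \<in> {1..m} \<Longrightarrow> j < n \<Longrightarrow>
           (\<lambda>k. (A *\<^sub>v X k i) $ j) \<longlonglongrightarrow> (A *\<^sub>v Y i) $ j"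
proof -
  have E: "EE m Z = (\<Sum>i\<in>{1..m}. \<Sum>j<n. Z i $ j * Z i $ j)"
    if "\<And>i. i \<in> {1..m} \<Longrightarrow> Z i \<in> carrier_vec n" for Z
    unfolding EE_def by (rule sum.cong) (use that in \<open>auto simp: sp_sum\<close>)
  show "(\<lambda>k. EE m (X k)) \<longlonglongrightarrow> EE m Y"
  proof -
    have e1: "EE m (X k) = (\<Sum>i\<in>{1..m}. \<Sum>j<n. X k i $ j * X k i $ j)" for k
      by (rule E) (rule XC)
    have e2: "EE m Y = (\<Sum>i\<in>{1..m}. \<Sum>j<n. Y i $ j * Y i $ j)"
      by (rule E) (rule YC)
    show ?thesis
    unfolding e1 e2 by (intro tendsto_sum tendsto_mult conv) auto
  qed
  have S: "SS m Z = (\<Sum>i\<in>{1..m}. \<Sum>j<n. (Z i $ j - Z (cyc_prev m i) $ j) * (Z i $ j - Z (cyc_prev m i) $ j))"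
    if ZC: "\<And>i. i \<in> {1..m} \<Longrightarrow> Z i \<in> carrier_vec n" for Z
    unfolding SS_def
  proof (rule sum.cong)
    fix i assume i: "i \<in> {1..m}"
    have c: "Z i \<in> carrier_vec n" "Z (cyc_prev m i) \<in> carrier_vec n"
      using ZC i cyc_prev_in[OF m i] by auto
    hence "Z i - Z (cyc_prev m i) \<in> carrier_vec n" by simp
    thus "(Z i - Z (cyc_prev m i)) \<bullet> (Z i - Z (cyc_prev m i)) =
        (\<Sum>j<n. (Z i $ j - Z (cyc_prev m i) $ j) * (Z i $ j - Z (cyc_prev m i) $ j))"
      using c by (simp add: scalar_prod_def atLeast0LessThan)
  qed simp
  show "(\<lambda>k. SS m (X k)) \<longlonglongrightarrow> SS m Y"
  proof -
    have e1: "SS m (X k) = (\<Sum>i\<in>{1..m}. \<Sum>j<n. (X k i $ j - X k (cyc_prev m i) $ j) * (X k i $ j - X k (cyc_prev m i) $ j))" for k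
      by (rule S) (rule XC)
    have e2: "SS m Y = (\<Sum>i\<in>{1..m}. \<Sum>j<n. (Y i $ j - Y (cyc_prev m i) $ j) * (Y i $ j - Y (cyc_prev m i) $ j))"
      by (rule S) (rule YC)
    show ?thesis
    unfolding e1 e2 using cyc_prev_in[OF m]
    by (intro tendsto_sum tendsto_mult tendsto_diff conv) auto
  qed
  show "(\<lambda>k. \<Sum>i\<in>{1..m}. X k i \<bullet> c) \<longlonglongrightarrow> (\<Sum>i\<in>{1..m}. Y i \<bullet> c)"
    if c: "c \<in> carrier_vec n" for c
    unfolding sp_sum[OF c] by (intro tendsto_sum tendsto_mult conv tendsto_const) auto
  show "(\<lambda>k. (A *\<^sub>v X k i) $ j) \<longlonglongrightarrow> (A *\<^sub>v Y i) $ j"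
    if A: "A \<in> carrier_mat n n" and i: "i \<in> {1..m}" and j: "j < n" for A i j
  proof -
    have e: "(A *\<^sub>v Z) $ j = (\<Sum>l<n. A $$ (j, l) * Z $ l)" if "Z \<in> carrier_vec n" for Z
      using that A j by (simp add: scalar_prod_def atLeast0LessThan)
    show ?thesis unfolding e[OF XC[OF i]] e[OF YC[OF i]]
      using i by (intro tendsto_sum tendsto_mult conv tendsto_const) auto
  qed
qed


lemma scale_lemmas:
  assumes m: "m \<ge> 1" and P: "\<And>i. i \<in> {1..m} \<Longrightarrow> P i \<in> carrier_mat n n" and G: "GG n m P d"
  shows "GG n m P (\<lambda>i. s \<cdot>\<^sub>v d i)" and "EE m (\<lambda>i. s \<cdot>\<^sub>v d i) = s^2 * EE m d"
    and "SS m (\<lambda>i. s \<cdot>\<^sub>v d i) = s^2 * SS m d"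
proof -
  have dc: "\<And>i. i \<in> {1..m} \<Longrightarrow> d i \<in> carrier_vec n" and Pd: "\<And>i. i \<in> {1..m} \<Longrightarrow> P i *\<^sub>v d i = d i"
    and orth: "\<And>c. c \<in> carrier_vec n \<Longrightarrow> (\<forall>i\<in>{1..m}. P i *\<^sub>v c = c) \<Longrightarrow> (\<Sum>i\<in>{1..m}. d i \<bullet> c) = 0"
    using G unfolding GG_def by auto
  show "GG n m P (\<lambda>i. s \<cdot>\<^sub>v d i)"
    unfolding GG_def
  proof (intro conjI ballI impI)
    fix i assume i: "i \<in> {1..m}"
    show "s \<cdot>\<^sub>v d i \<in> carrier_vec n" using dc[OF i] by simp
    show "P i *\<^sub>v (s \<cdot>\<^sub>v d i) = s \<cdot>\<^sub>v d i" using mult_mat_vec[OF P[OF i] dc[OF i]] Pd[OF i] by simp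
  next
    fix c :: "real vec" assume c: "c \<in> carrier_vec n" and h: "\<forall>i\<in>{1..m}. P i *\<^sub>v c = c"
    have "(\<Sum>i\<in>{1..m}. (s \<cdot>\<^sub>v d i) \<bullet> c) = (\<Sum>i\<in>{1..m}. s * (d i \<bullet> c))"
      by (rule sum.cong) (use dc c in \<open>auto simp: smult_scalar_prod_distrib\<close>)
    also have "\<dots> = s * (\<Sum>i\<in>{1..m}. d i \<bullet> c)" by (simp add: sum_distrib_left)
    finally show "(\<Sum>i\<in>{1..m}. (s \<cdot>\<^sub>v d i) \<bullet> c) = 0" using orth[OF c h] by simp
  qed
  show "EE m (\<lambda>i. s \<cdot>\<^sub>v d i) = s^2 * EE m d"
    unfolding EE_def sum_distrib_left
    by (rule sum.cong) (use dc in \<open>auto simp: sp_smult_smult power2_eq_square\<close>)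
  show "SS m (\<lambda>i. s \<cdot>\<^sub>v d i) = s^2 * SS m d"
    unfolding SS_def sum_distrib_left
  proof (rule sum.cong)
    fix i assume i: "i \<in> {1..m}"
    have c: "d i \<in> carrier_vec n" "d (cyc_prev m i) \<in> carrier_vec n"
      using dc i cyc_prev_in[OF m i] by auto
    have "s \<cdot>\<^sub>v d i - s \<cdot>\<^sub>v d (cyc_prev m i) = s \<cdot>\<^sub>v (d i - d (cyc_prev m i))"
      using c by (intro eq_vecI) (auto simp: algebra_simps)
    thus "(s \<cdot>\<^sub>v d i - s \<cdot>\<^sub>v d (cyc_prev m i)) \<bullet> (s \<cdot>\<^sub>v d i - s \<cdot>\<^sub>v d (cyc_prev m i)) =
        s\<^sup>2 * ((d i - d (cyc_prev m i)) \<bullet> (d i - d (cyc_prev m i)))"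
      using sp_smult_smult[of "d i - d (cyc_prev m i)" n s] c by simp
  qed simp
qed

lemma coord_sq_le: assumes "v \<in> carrier_vec n" "j < n" shows "(v $ j)^2 \<le> v \<bullet> (v::real vec)"
proof -
  have "v \<bullet> v = (\<Sum>l<n. v $ l * v $ l)" using assms by (simp add: scalar_prod_def atLeast0LessThan)
  moreover have "v $ j * v $ j \<le> (\<Sum>l<n. v $ l * v $ l)"
    by (rule member_le_sum[of j "{..<n}" "\<lambda>l. v $ l * v $ l"]) (use assms in auto)
  ultimately show ?thesis by (simp add: power2_eq_square)
qed

lemma compact_bound:
  assumes m: "m \<ge> 1" and P: "\<And>i. i \<in> {1..m} \<Longrightarrow> P i \<in> carrier_mat n n"
  shows "\<exists>\<kappa>>0. \<forall>d. GG n m P d \<longrightarrow> \<kappa> * EE m d \<le> SS m d"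
proof (rule ccontr)
  assume neg: "\<not> ?thesis"
  have ex: "\<exists>d. GG n m P d \<and> EE m d = 1 \<and> SS m d < 1 / real (Suc k)" for k
  proof -
    have kp: "1 / real (Suc k) > 0" by simp
    then obtain d0 where G0: "GG n m P d0" and lt: "\<not> (1 / real (Suc k) * EE m d0 \<le> SS m d0)"
      using neg by blast
    have "0 < 1 / real (Suc k) * EE m d0" using lt SS_ge0[of m d0] by linarith
    hence Ep: "EE m d0 > 0" using kp by (auto simp: zero_less_mult_iff zero_less_divide_iff)
    define s where "s = 1 / sqrt (EE m d0)"
    have s2: "s^2 * EE m d0 = 1" unfolding s_def using Ep by (simp add: power_divide)
    have "s^2 * SS m d0 < s^2 * (1 / real (Suc k) * EE m d0)"
      using lt Ep unfolding s_def by (intro mult_strict_left_mono) auto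
    hence "s^2 * SS m d0 < 1 / real (Suc k)" using s2 by (simp add: algebra_simps)
    thus ?thesis using scale_lemmas[OF m P G0, of s] s2 by metis
  qed
  then obtain dd where dd: "\<And>k. GG n m P (dd k) \<and> EE m (dd k) = 1 \<and> SS m (dd k) < 1 / real (Suc k)"
    by metis
  have ddc: "\<And>k i. i \<in> {1..m} \<Longrightarrow> dd k i \<in> carrier_vec n" using dd unfolding GG_def by blast
  have bnd: "\<bar>dd k i $ j\<bar> \<le> 1" if i: "i \<in> {1..m}" and j: "j < n" for k i j
  proof -
    have "(dd k i $ j)^2 \<le> dd k i \<bullet> dd k i" by (rule coord_sq_le[OF ddc[OF i] j])
    also have "\<dots> \<le> EE m (dd k)" unfolding EE_def
      by (rule member_le_sum) (use i in \<open>auto intro: sp_self_ge0\<close>)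
    finally show ?thesis using dd[of k] by (simp add: abs_square_le_1)
  qed
  define f where "f = (\<lambda>k (ij::nat\<times>nat). dd k (fst ij) $ snd ij)"
  have "\<forall>\<delta>\<subseteq>{1..m} \<times> {..<n}. \<exists>l::nat\<times>nat\<Rightarrow>real. \<exists>r::nat\<Rightarrow>nat.
    strict_mono r \<and> (\<forall>\<epsilon>>0. eventually (\<lambda>k. \<forall>ij\<in>\<delta>. dist (f (r k) ij) (l ij) < \<epsilon>) sequentially)"
  proof (rule compact_lemma_general[where proj="\<lambda>x ij. x ij" and unproj="\<lambda>x. x"])
    show "finite ({1..m} \<times> {..<n})" by simp
    fix ij assume ij: "ij \<in> {1..m} \<times> {..<n}"
    show "bounded ((\<lambda>x. x ij) ` range f)"
      unfolding bounded_iff using bnd ij unfolding f_def by (intro exI[of _ 1]) auto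
  qed auto
  then obtain l r where r: "strict_mono r"
    and lr: "\<forall>\<epsilon>>0. eventually (\<lambda>k. \<forall>ij\<in>{1..m} \<times> {..<n}. dist (f (r k) ij) (l ij) < \<epsilon>) sequentially"
    by blast
  define ds where "ds = (\<lambda>i. vec n (\<lambda>j. l (i, j)))"
  have dsc: "\<And>i. ds i \<in> carrier_vec n" unfolding ds_def by simp
  have conv: "(\<lambda>k. dd (r k) i $ j) \<longlonglongrightarrow> ds i $ j" if i: "i \<in> {1..m}" and j: "j < n" for i j
  proof (rule tendstoI)
    fix e :: real assume "e > 0"
    with lr have "eventually (\<lambda>k. \<forall>ij\<in>{1..m} \<times> {..<n}. dist (f (r k) ij) (l ij) < e) sequentially"
      by blast
    thus "eventually (\<lambda>k. dist (dd (r k) i $ j) (ds i $ j) < e) sequentially"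
      by (rule eventually_mono) (use i j in \<open>auto simp: f_def ds_def\<close>)
  qed
  have ddc': "\<And>k i. i \<in> {1..m} \<Longrightarrow> dd (r k) i \<in> carrier_vec n" using ddc by blast
  have dsc': "\<And>i. i \<in> {1..m} \<Longrightarrow> ds i \<in> carrier_vec n" using dsc by blast
  have L1: "(\<lambda>k. EE m (dd (r k))) \<longlonglongrightarrow> EE m ds"
    by (rule lim_lemmas(1)[where X="\<lambda>k. dd (r k)" and Y=ds and n=n and m=m])
       (use m ddc' dsc' conv in auto)
  have L2: "(\<lambda>k. SS m (dd (r k))) \<longlonglongrightarrow> SS m ds"
    by (rule lim_lemmas(2)[where X="\<lambda>k. dd (r k)" and Y=ds and n=n and m=m])
       (use m ddc' dsc' conv in auto)
  have L3: "(\<lambda>k. \<Sum>i\<in>{1..m}. dd (r k) i \<bullet> c) \<longlonglongrightarrow> (\<Sum>i\<in>{1..m}. ds i \<bullet> c)"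
    if "c \<in> carrier_vec n" for c
    by (rule lim_lemmas(3)[where X="\<lambda>k. dd (r k)" and Y=ds and n=n and m=m])
       (use m ddc' dsc' conv that in auto)
  have L4: "(\<lambda>k. (A *\<^sub>v dd (r k) i) $ j) \<longlonglongrightarrow> (A *\<^sub>v ds i) $ j"
    if "A \<in> carrier_mat n n" "i \<in> {1..m}" "j < n" for A i j
    by (rule lim_lemmas(4)[where X="\<lambda>k. dd (r k)" and Y=ds and n=n and m=m])
       (use m ddc' dsc' conv that in auto)
  have E1: "EE m ds = 1"
    using L1 dd by (simp add: LIMSEQ_const_iff)
  have S0: "SS m ds = 0"
  proof -
    have up: "(\<lambda>k. 1 / real (Suc k)) \<longlonglongrightarrow> 0" using LIMSEQ_inverse_real_of_nat
      by (simp add: inverse_eq_divide)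
    have "SS m (dd (r k)) \<le> 1 / real (Suc k)" for k
    proof -
      have "k \<le> r k" using r by (rule strict_mono_imp_increasing)
      hence "1 / real (Suc (r k)) \<le> 1 / real (Suc k)" by (simp add: frac_le)
      thus ?thesis using dd[of "r k"] by linarith
    qed
    hence "(\<lambda>k. SS m (dd (r k))) \<longlonglongrightarrow> 0"
      by (intro real_tendsto_sandwich[OF _ _ tendsto_const up]) (auto intro!: always_eventually SS_ge0)
    thus ?thesis using L2 LIMSEQ_unique by blast
  qed
  have GG: "GG n m P ds"
    unfolding GG_def
  proof (intro conjI ballI impI)
    fix i assume i: "i \<in> {1..m}"
    show "ds i \<in> carrier_vec n" by (rule dsc)
    show "P i *\<^sub>v ds i = ds i"
    proof (rule eq_vecI)
      fix j assume "j < dim_vec (ds i)"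
      hence j: "j < n" unfolding ds_def by simp
      have "(\<lambda>k. (P i *\<^sub>v dd (r k) i) $ j) \<longlonglongrightarrow> (P i *\<^sub>v ds i) $ j" by (rule L4[OF P[OF i] i j])
      moreover have "(P i *\<^sub>v dd (r k) i) = dd (r k) i" for k using dd[of "r k"] i unfolding GG_def by blast
      ultimately have "(\<lambda>k. dd (r k) i $ j) \<longlonglongrightarrow> (P i *\<^sub>v ds i) $ j" by simp
      thus "(P i *\<^sub>v ds i) $ j = ds i $ j" using conv[OF i j] LIMSEQ_unique by blast
    qed (use P[OF i] in \<open>simp add: ds_def\<close>)
  next
    fix c assume c: "c \<in> carrier_vec n" and h: "\<forall>i\<in>{1..m}. P i *\<^sub>v c = c"
    have "(\<Sum>i\<in>{1..m}. dd (r k) i \<bullet> c) = 0" for k using dd[of "r k"] c h unfolding GG_def by blast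
    hence "(\<lambda>k. \<Sum>i\<in>{1..m}. dd (r k) i \<bullet> c) \<longlonglongrightarrow> 0" by simp
    thus "(\<Sum>i\<in>{1..m}. ds i \<bullet> c) = 0" using L3[OF c] LIMSEQ_unique by blast
  qed
  show False using GG_zero[OF m GG S0] E1 by simp
qed




lemma null_cmp: assumes "\<And>t. \<bar>f t\<bar> \<le> g t" and "g \<longlonglongrightarrow> 0"
  shows "(f::nat \<Rightarrow> real) \<longlonglongrightarrow> 0"
proof (rule real_tendsto_sandwich[where f="\<lambda>t. - g t" and h=g])
  show "\<forall>\<^sub>F t in sequentially. - g t \<le> f t" using assms(1) by (auto intro!: always_eventually) (smt (verit) abs_le_iff)
  show "\<forall>\<^sub>F t in sequentially. f t \<le> g t" using assms(1) by (auto intro!: always_eventually) (smt (verit) abs_le_iff)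
  show "(\<lambda>t. - g t) \<longlonglongrightarrow> 0" using tendsto_minus[OF assms(2)] by simp
qed (rule assms(2))

lemma traj:
  assumes m: "m \<ge> 1"
    and Pc: "\<And>i. i \<in> {1..m} \<Longrightarrow> P i \<in> carrier_mat n n"
    and PP: "\<And>i. i \<in> {1..m} \<Longrightarrow> P i * P i = P i"
    and PT: "\<And>i. i \<in> {1..m} \<Longrightarrow> (P i)\<^sup>T = P i"
    and x0: "\<And>i. i \<in> {1..m} \<Longrightarrow> x i 0 \<in> carrier_vec n"
    and rec: "\<And>i t. i \<in> {1..m} \<Longrightarrow>
           x i (Suc t) = x i t - (1/2) \<cdot>\<^sub>v (P i *\<^sub>v (x i t - x (cyc_prev m i) t))"
  shows "\<exists>y. (\<forall>i\<in>{1..m}. y i \<in> carrier_vec n \<and> P i *\<^sub>v (y i - y (cyc_prev m i)) = 0\<^sub>v n) \<and>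
      (\<exists>c>0. \<exists>\<rho>. 0 \<le> \<rho> \<and> \<rho> < 1 \<and> (\<forall>i\<in>{1..m}. \<forall>t. vnorm (x i t - y i) \<le> c * \<rho> ^ t))"
proof -
  define p where "p = cyc_prev m"
  have pin: "\<And>i. i \<in> {1..m} \<Longrightarrow> p i \<in> {1..m}" unfolding p_def using cyc_prev_in[OF m] .
  have xc: "x i t \<in> carrier_vec n" if i: "i \<in> {1..m}" for i t
  proof (induction t)
    case 0 show ?case using x0[OF i] .
  next
    case (Suc t)
    have "dim_vec (x i (Suc t)) = n" unfolding rec[OF i, of t] using Pc[OF i] by simp
    thus ?case by (rule carrier_vecI)
  qed
  have xd: "dim_vec (x i t) = n" if "i \<in> {1..m}" for i t using xc[OF that] by simp
  define w where "w t i = x i t - x (p i) t" for t i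
  have wc: "\<And>i t. i \<in> {1..m} \<Longrightarrow> w t i \<in> carrier_vec n" unfolding w_def using xc pin by simp
  define D where "D t i = (1/2) \<cdot>\<^sub>v (P i *\<^sub>v w t i)" for t i
  have Dc: "D t i \<in> carrier_vec n" if "i \<in> {1..m}" for i t
    unfolding D_def using Pc[OF that] wc[OF that] by simp
  have Dd: "dim_vec (D t i) = n" if "i \<in> {1..m}" for i t using Dc[OF that] by simp
  have xs: "\<And>i t. i \<in> {1..m} \<Longrightarrow> x i (Suc t) = x i t - D t i"
    unfolding D_def w_def p_def using rec by simp
  have PD: "P i *\<^sub>v D t i = D t i" if i: "i \<in> {1..m}" for i t
  proof -
    have "P i *\<^sub>v D t i = (1/2) \<cdot>\<^sub>v (P i *\<^sub>v (P i *\<^sub>v w t i))"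
      unfolding D_def using mult_mat_vec[OF Pc[OF i], of "P i *\<^sub>v w t i"] Pc[OF i] wc[OF i] by simp
    also have "P i *\<^sub>v (P i *\<^sub>v w t i) = P i *\<^sub>v w t i"
      using assoc_mult_mat_vec[OF Pc[OF i] Pc[OF i] wc[OF i]] PP[OF i] by simp
    finally show ?thesis unfolding D_def .
  qed
  have Pw: "P i *\<^sub>v w t i = 2 \<cdot>\<^sub>v D t i" if i: "i \<in> {1..m}" for i t
    unfolding D_def using Pc[OF i] wc[OF i] by (intro eq_vecI) auto
  have Drec: "D (Suc t) i = (1/2) \<cdot>\<^sub>v (D t i + P i *\<^sub>v D t (p i))" if i: "i \<in> {1..m}" for i t
  proof -
    have c1: "D t i \<in> carrier_vec n" "D t (p i) \<in> carrier_vec n" using Dc i pin by auto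
    have e1: "w (Suc t) i = w t i - (D t i - D t (p i))"
      unfolding w_def using xs[OF i] xs[OF pin[OF i]] xd[OF i] xd[OF pin[OF i]] Dd[OF i] Dd[OF pin[OF i]]
      by (intro eq_vecI) auto
    have "P i *\<^sub>v w (Suc t) i = P i *\<^sub>v w t i - (P i *\<^sub>v D t i - P i *\<^sub>v D t (p i))"
      unfolding e1 using Pc[OF i] wc[OF i] c1
      by (simp add: mult_minus_distrib_mat_vec)
    also have "\<dots> = 2 \<cdot>\<^sub>v D t i - (D t i - P i *\<^sub>v D t (p i))" using Pw[OF i] PD[OF i] by simp
    finally have "P i *\<^sub>v w (Suc t) i = 2 \<cdot>\<^sub>v D t i - (D t i - P i *\<^sub>v D t (p i))" .
    thus ?thesis unfolding D_def[of "Suc t"] using c1 Pc[OF i]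
      by (intro eq_vecI) auto
  qed
  have Edec: "EE m (D (Suc t)) + (1/4) * SS m (D t) \<le> EE m (D t)" for t
  proof -
    have "EE m (D (Suc t)) + (1/4) * SS m (D t) =
        (\<Sum>i\<in>{1..m}. ((1/2) \<cdot>\<^sub>v (D t i + P i *\<^sub>v D t (p i))) \<bullet> ((1/2) \<cdot>\<^sub>v (D t i + P i *\<^sub>v D t (p i)))
           + (1/4) * ((D t i - D t (p i)) \<bullet> (D t i - D t (p i))))"
      unfolding EE_def SS_def p_def[symmetric] sum_distrib_left sum.distrib[symmetric]
      by (rule sum.cong) (auto simp: Drec)
    also have "\<dots> \<le> (\<Sum>i\<in>{1..m}. (1/2) * (D t i \<bullet> D t i) + (1/2) * (D t (p i) \<bullet> D t (p i)))"
    proof (rule sum_mono)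
      fix i assume i: "i \<in> {1..m}"
      show "((1/2) \<cdot>\<^sub>v (D t i + P i *\<^sub>v D t (p i))) \<bullet> ((1/2) \<cdot>\<^sub>v (D t i + P i *\<^sub>v D t (p i)))
           + (1/4) * ((D t i - D t (p i)) \<bullet> (D t i - D t (p i))) \<le>
           (1/2) * (D t i \<bullet> D t i) + (1/2) * (D t (p i) \<bullet> D t (p i))"
        by (rule key_step[OF Pc[OF i] PT[OF i] PP[OF i] Dc[OF i] Dc[OF pin[OF i]] PD[OF i]])
    qed
    also have "\<dots> = (1/2) * EE m (D t) + (1/2) * (\<Sum>i\<in>{1..m}. D t (p i) \<bullet> D t (p i))"
      unfolding EE_def by (simp add: sum.distrib sum_distrib_left)
    also have "(\<Sum>i\<in>{1..m}. D t (p i) \<bullet> D t (p i)) = EE m (D t)"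
      unfolding EE_def p_def using sum_cyc_prev[OF m, of "\<lambda>i. D t i \<bullet> D t i"] by simp
    finally show ?thesis by simp
  qed
  have GGD: "GG n m P (D t)" for t
    unfolding GG_def
  proof (intro conjI ballI impI)
    fix i assume "i \<in> {1..m}"
    thus "D t i \<in> carrier_vec n" "P i *\<^sub>v D t i = D t i" using Dc PD by auto
  next
    fix c assume c: "c \<in> carrier_vec n" and h: "\<forall>i\<in>{1..m}. P i *\<^sub>v c = c"
    have "D t i \<bullet> c = (1/2) * (x i t \<bullet> c - x (p i) t \<bullet> c)" if i: "i \<in> {1..m}" for i
    proof -
      have "D t i \<bullet> c = (1/2) * ((P i *\<^sub>v w t i) \<bullet> c)"
        unfolding D_def using Pc[OF i] wc[OF i] c by simp
      also have "(P i *\<^sub>v w t i) \<bullet> c = w t i \<bullet> (P i *\<^sub>v c)"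
        by (rule sym_proj_move[OF Pc[OF i] PT[OF i] wc[OF i] c])
      also have "\<dots> = x i t \<bullet> c - x (p i) t \<bullet> c"
        unfolding w_def using h i minus_scalar_prod_distrib[OF xc[OF i] xc[OF pin[OF i]] c] by simp
      finally show ?thesis .
    qed
    hence "(\<Sum>i\<in>{1..m}. D t i \<bullet> c) = (\<Sum>i\<in>{1..m}. (1/2) * (x i t \<bullet> c - x (p i) t \<bullet> c))"
      by (intro sum.cong) auto
    also have "\<dots> = (1/2) * ((\<Sum>i\<in>{1..m}. x i t \<bullet> c) - (\<Sum>i\<in>{1..m}. x (p i) t \<bullet> c))"
      by (simp only: sum_distrib_left[symmetric] sum_subtractf)
    also have "(\<Sum>i\<in>{1..m}. x (p i) t \<bullet> c) = (\<Sum>i\<in>{1..m}. x i t \<bullet> c)"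
      unfolding p_def by (rule sum_cyc_prev[OF m])
    finally show "(\<Sum>i\<in>{1..m}. D t i \<bullet> c) = 0" by simp
  qed
  obtain \<kappa>0 where k0: "\<kappa>0 > 0" "\<forall>d. GG n m P d \<longrightarrow> \<kappa>0 * EE m d \<le> SS m d"
    using compact_bound[where m=m and P=P and n=n] m Pc by blast
  define \<kappa> where "\<kappa> = min \<kappa>0 1"
  have kp: "0 < \<kappa>" "\<kappa> \<le> 1" unfolding \<kappa>_def using k0 by auto
  have kb: "\<kappa> * EE m (D t) \<le> SS m (D t)" for t
  proof -
    have "\<kappa> * EE m (D t) \<le> \<kappa>0 * EE m (D t)"
      unfolding \<kappa>_def using EE_ge0[of m "D t"] by (intro mult_right_mono) auto
    also have "\<dots> \<le> SS m (D t)" using k0 GGD by blast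
    finally show ?thesis .
  qed
  define \<rho> where "\<rho> = 1 - \<kappa> / 4"
  have rho: "0 \<le> \<rho>" "\<rho> < 1" unfolding \<rho>_def using kp by auto
  have Estep: "EE m (D (Suc t)) \<le> \<rho> * EE m (D t)" for t
    using Edec[of t] kb[of t] unfolding \<rho>_def by (simp add: algebra_simps)
  have Ebound: "EE m (D t) \<le> \<rho>^t * EE m (D 0)" for t
  proof (induction t)
    case (Suc t)
    have "EE m (D (Suc t)) \<le> \<rho> * EE m (D t)" by (rule Estep)
    also have "\<dots> \<le> \<rho> * (\<rho>^t * EE m (D 0))" using Suc rho by (intro mult_left_mono) auto
    finally show ?case by (simp add: algebra_simps)
  qed simp
  define \<sigma> where "\<sigma> = sqrt \<rho>"
  have sig: "0 \<le> \<sigma>" "\<sigma> < 1" unfolding \<sigma>_def using rho by auto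
  have s2: "\<sigma>^2 = \<rho>" unfolding \<sigma>_def using rho by simp
  have sig2: "(\<sigma>^t)^2 = \<rho>^t" for t
  proof -
    have "(\<sigma>^t)^2 = \<sigma>^(t*2)" by (rule power_mult[symmetric])
    also have "\<dots> = (\<sigma>^2)^t" by (subst mult.commute) (rule power_mult)
    finally show ?thesis using s2 by simp
  qed
  define K where "K = sqrt (EE m (D 0))"
  have Kp: "K \<ge> 0" unfolding K_def using EE_ge0[of m "D 0"] by simp
  have K2: "K^2 = EE m (D 0)" unfolding K_def using EE_ge0[of m "D 0"] by simp
  have Dcoord: "\<bar>D t i $ j\<bar> \<le> K * \<sigma>^t" if i: "i \<in> {1..m}" and j: "j < n" for t i j
  proof -
    have "(D t i $ j)^2 \<le> D t i \<bullet> D t i" by (rule coord_sq_le[OF Dc[OF i] j])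
    also have "\<dots> \<le> EE m (D t)" unfolding EE_def
      by (rule member_le_sum) (use i in \<open>auto intro: sp_self_ge0\<close>)
    also have "\<dots> \<le> \<rho>^t * EE m (D 0)" by (rule Ebound)
    also have "\<dots> = (K * \<sigma>^t)^2" using K2 sig2[of t] by (simp add: power_mult_distrib)
    finally have "\<bar>D t i $ j\<bar>^2 \<le> (K * \<sigma>^t)^2" by simp
    thus ?thesis by (rule power2_le_imp_le) (use Kp sig in simp)
  qed
  have gsum: "summable (\<lambda>s. K * \<sigma>^s)" using sig by (intro summable_mult summable_geometric) simp
  have nsumm: "summable (\<lambda>s. norm (D s i $ j))" if i: "i \<in> {1..m}" and j: "j < n" for i j
    by (rule summable_comparison_test'[OF gsum]) (use Dcoord[OF i j] in simp)
  have summ: "summable (\<lambda>s. D s i $ j)" if i: "i \<in> {1..m}" and j: "j < n" for i j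
    by (rule summable_comparison_test'[OF gsum]) (use Dcoord[OF i j] in simp)
  define y where "y i = vec n (\<lambda>j. x i 0 $ j - (\<Sum>s. D s i $ j))" for i
  have yc: "y i \<in> carrier_vec n" for i unfolding y_def by simp
  have xform: "x i t $ j = x i 0 $ j - (\<Sum>s<t. D s i $ j)" if i: "i \<in> {1..m}" and j: "j < n" for i j t
  proof (induction t)
    case (Suc t)
    have "x i (Suc t) $ j = x i t $ j - D t i $ j" using xs[OF i, of t] Dd[OF i] j by simp
    thus ?case using Suc by simp
  qed simp
  define B where "B = K / (1 - \<sigma>)"
  have Bp: "B \<ge> 0" unfolding B_def using Kp sig by simp
  have tail: "\<bar>x i t $ j - y i $ j\<bar> \<le> B * \<sigma>^t" if i: "i \<in> {1..m}" and j: "j < n" for i j t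
  proof -
    have "x i t $ j - y i $ j = (\<Sum>s. D s i $ j) - (\<Sum>s<t. D s i $ j)"
      unfolding y_def using j xform[OF i j, of t] by simp
    also have "\<dots> = (\<Sum>s. D (s + t) i $ j)"
      using suminf_split_initial_segment[OF summ[OF i j], of t] by simp
    finally have e: "x i t $ j - y i $ j = (\<Sum>s. D (s + t) i $ j)" .
    have ns: "summable (\<lambda>s. norm (D (s + t) i $ j))"
      using summable_ignore_initial_segment[OF nsumm[OF i j], of t] by simp
    have gs: "summable (\<lambda>s. K * \<sigma>^t * \<sigma>^s)" using sig by (intro summable_mult summable_geometric) simp
    have "\<bar>\<Sum>s. D (s + t) i $ j\<bar> \<le> (\<Sum>s. norm (D (s + t) i $ j))"
      using summable_norm[OF ns] by simp
    also have "\<dots> \<le> (\<Sum>s. K * \<sigma>^t * \<sigma>^s)"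
    proof (rule suminf_le[OF _ ns gs])
      fix s show "norm (D (s + t) i $ j) \<le> K * \<sigma>^t * \<sigma>^s"
        using Dcoord[OF i j, of "s + t"] by (simp add: power_add mult.assoc mult.commute[of "\<sigma>^s"])
    qed
    also have "\<dots> = K * \<sigma>^t * (1 / (1 - \<sigma>))"
      using suminf_mult[OF summable_geometric[of \<sigma>], of "K * \<sigma>^t"] suminf_geometric[of \<sigma>] sig by simp
    also have "\<dots> = B * \<sigma>^t" unfolding B_def by simp
    finally show ?thesis using e by simp
  qed
  have vbound: "vnorm (x i t - y i) \<le> sqrt (real n) * B * \<sigma>^t" if i: "i \<in> {1..m}" for i t
  proof -
    have "(x i t - y i) \<bullet> (x i t - y i) = (\<Sum>j<n. (x i t $ j - y i $ j)^2)"
      using xd[OF i] yc[of i] by (simp add: scalar_prod_def atLeast0LessThan power2_eq_square)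
    also have "\<dots> \<le> (\<Sum>j<n. (B * \<sigma>^t)^2)"
    proof (rule sum_mono)
      fix j assume "j \<in> {..<n}"
      hence "\<bar>x i t $ j - y i $ j\<bar> \<le> B * \<sigma>^t" using tail[OF i] by simp
      thus "(x i t $ j - y i $ j)^2 \<le> (B * \<sigma>^t)^2"
        by (metis abs_ge_zero order_trans power2_abs power_mono)
    qed
    also have "\<dots> = (sqrt (real n) * B * \<sigma>^t)^2" by (simp add: power_mult_distrib)
    finally have "sqrt ((x i t - y i) \<bullet> (x i t - y i)) \<le> sqrt ((sqrt (real n) * B * \<sigma>^t)^2)"
      by (rule real_sqrt_le_mono)
    also have "\<dots> = sqrt (real n) * B * \<sigma>^t" using Bp sig by simp
    finally show ?thesis unfolding vnorm_def .
  qed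
  have cons: "P i *\<^sub>v (y i - y (p i)) = 0\<^sub>v n" if i: "i \<in> {1..m}" for i
  proof (rule eq_vecI)
    fix j assume "j < dim_vec (0\<^sub>v n :: real vec)"
    hence j: "j < n" by simp
    have g0: "(\<lambda>t. B * \<sigma>^t) \<longlonglongrightarrow> 0" using sig by (intro tendsto_mult_right_zero LIMSEQ_power_zero) simp
    have xconv: "(\<lambda>t. x i' t $ l) \<longlonglongrightarrow> y i' $ l" if i': "i' \<in> {1..m}" and l: "l < n" for i' l
    proof -
      have "(\<lambda>t. x i' t $ l - y i' $ l) \<longlonglongrightarrow> 0"
        by (rule null_cmp[OF _ g0]) (use tail[OF i' l] in simp)
      hence "(\<lambda>t. (x i' t $ l - y i' $ l) + y i' $ l) \<longlonglongrightarrow> 0 + y i' $ l"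
        by (intro tendsto_add tendsto_const)
      thus ?thesis by simp
    qed
    have "(\<lambda>t. (P i *\<^sub>v w t i) $ j) \<longlonglongrightarrow> (\<Sum>l<n. P i $$ (j, l) * (y i $ l - y (p i) $ l))"
    proof -
      have e: "(P i *\<^sub>v w t i) $ j = (\<Sum>l<n. P i $$ (j, l) * (x i t $ l - x (p i) t $ l))" for t
        unfolding w_def using Pc[OF i] j xd[OF i] xd[OF pin[OF i]]
        by (simp add: scalar_prod_def atLeast0LessThan)
      show ?thesis unfolding e using i pin[OF i]
        by (intro tendsto_sum tendsto_mult tendsto_const tendsto_diff xconv) auto
    qed
    moreover have "(\<lambda>t. (P i *\<^sub>v w t i) $ j) \<longlonglongrightarrow> 0"
    proof -
      have g1: "(\<lambda>t. 2 * (K * \<sigma>^t)) \<longlonglongrightarrow> 0" using sig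
        by (intro tendsto_mult_right_zero LIMSEQ_power_zero) simp
      show ?thesis
        by (rule null_cmp[OF _ g1]) (use Pw[OF i] Dcoord[OF i j] Dd[OF i] j in \<open>simp add: abs_mult\<close>)
    qed
    ultimately have "(\<Sum>l<n. P i $$ (j, l) * (y i $ l - y (p i) $ l)) = 0" using LIMSEQ_unique by blast
    moreover have "(P i *\<^sub>v (y i - y (p i))) $ j = (\<Sum>l<n. P i $$ (j, l) * (y i $ l - y (p i) $ l))"
      using Pc[OF i] j yc[of i] yc[of "p i"] by (simp add: scalar_prod_def atLeast0LessThan)
    ultimately show "(P i *\<^sub>v (y i - y (p i))) $ j = 0\<^sub>v n $ j" using j by simp
  qed (use Pc[OF i] in simp)
  have part1: "\<forall>i\<in>{1..m}. y i \<in> carrier_vec n \<and> P i *\<^sub>v (y i - y (cyc_prev m i)) = 0\<^sub>v n"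
    using yc cons unfolding p_def by blast
  have "0 \<le> sqrt (real n) * B" using Bp by simp
  hence cpos: "0 < sqrt (real n) * B + 1" by linarith
  have bnd: "\<forall>i\<in>{1..m}. \<forall>t. vnorm (x i t - y i) \<le> (sqrt (real n) * B + 1) * \<sigma>^t"
  proof (intro ballI allI)
    fix i t assume i: "i \<in> {1..m}"
    have "vnorm (x i t - y i) \<le> sqrt (real n) * B * \<sigma>^t" by (rule vbound[OF i])
    also have "\<dots> \<le> (sqrt (real n) * B + 1) * \<sigma>^t" using sig by (simp add: algebra_simps)
    finally show "vnorm (x i t - y i) \<le> (sqrt (real n) * B + 1) * \<sigma>^t" .
  qed
  show ?thesis using part1 cpos sig bnd by blast
qed




theorem theorem7:
  fixes n m :: nat and k :: "nat \<Rightarrow> nat"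
    and C :: "nat \<Rightarrow> real mat" and x :: "nat \<Rightarrow> nat \<Rightarrow> real vec"
  assumes "m \<ge> 2"
    and "\<And>i. i \<in> {1..m} \<Longrightarrow> C i \<in> carrier_mat (k i) n"
    and "\<And>i. i \<in> {1..m} \<Longrightarrow> full_row_rank (C i)"
    and "well_configured n m C"
    and "\<And>i. i \<in> {1..m} \<Longrightarrow> x i 0 \<in> carrier_vec n"
    and "\<And>i t. i \<in> {1..m} \<Longrightarrow>
           x i (Suc t) = x i t - (1/2) \<cdot>\<^sub>v (proj_mat (C i) *\<^sub>v (x i t - x (cyc_prev m i) t))"
  shows "\<exists>xstar \<in> carrier_vec n. \<exists>c > 0. \<exists>\<rho>. 0 \<le> \<rho> \<and> \<rho> < 1 \<and>
           (\<forall>i\<in>{1..m}. \<forall>t. vnorm (x i t - xstar) \<le> c * \<rho> ^ t)"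
proof -
  have m1: "m \<ge> 1" using assms(1) by simp
  have pf: "proj_mat (C i) \<in> carrier_mat n n \<and> proj_mat (C i) * proj_mat (C i) = proj_mat (C i) \<and>
         (proj_mat (C i))\<^sup>T = proj_mat (C i) \<and> C i * proj_mat (C i) = C i" if i: "i \<in> {1..m}" for i
    by (rule proj_facts[OF assms(2)[OF i] assms(3)[OF i]])
  have "\<exists>y. (\<forall>i\<in>{1..m}. y i \<in> carrier_vec n \<and> proj_mat (C i) *\<^sub>v (y i - y (cyc_prev m i)) = 0\<^sub>v n) \<and>
      (\<exists>c>0. \<exists>\<rho>. 0 \<le> \<rho> \<and> \<rho> < 1 \<and> (\<forall>i\<in>{1..m}. \<forall>t. vnorm (x i t - y i) \<le> c * \<rho> ^ t))"
    by (rule traj[where P="\<lambda>i. proj_mat (C i)" and x=x and m=m and n=n])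
       (use m1 pf assms(5) assms(6) in auto)
  then obtain y where y: "\<forall>i\<in>{1..m}. y i \<in> carrier_vec n \<and> proj_mat (C i) *\<^sub>v (y i - y (cyc_prev m i)) = 0\<^sub>v n"
    and cb: "\<exists>c>0. \<exists>\<rho>. 0 \<le> \<rho> \<and> \<rho> < 1 \<and> (\<forall>i\<in>{1..m}. \<forall>t. vnorm (x i t - y i) \<le> c * \<rho> ^ t)"
    by blast
  have Ceq: "C i *\<^sub>v y i = C i *\<^sub>v y (cyc_prev m i)" if i: "i \<in> {1..m}" for i
  proof -
    have pi: "cyc_prev m i \<in> {1..m}" using cyc_prev_in[OF m1 i] .
    have yi: "y i \<in> carrier_vec n" "y (cyc_prev m i) \<in> carrier_vec n" using y i pi by auto
    have Ci: "C i \<in> carrier_mat (k i) n" using assms(2)[OF i] .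
    have Pi: "proj_mat (C i) \<in> carrier_mat n n" "C i * proj_mat (C i) = C i" using pf[OF i] by auto
    have "C i *\<^sub>v (y i - y (cyc_prev m i)) = (C i * proj_mat (C i)) *\<^sub>v (y i - y (cyc_prev m i))"
      using Pi by simp
    also have "\<dots> = C i *\<^sub>v (proj_mat (C i) *\<^sub>v (y i - y (cyc_prev m i)))"
      by (rule assoc_mult_mat_vec[OF Ci Pi(1)]) (use yi in simp)
    also have "\<dots> = C i *\<^sub>v 0\<^sub>v n" using y i by simp
    also have "\<dots> = 0\<^sub>v (k i)" using Ci by (intro eq_vecI) auto
    finally have z: "C i *\<^sub>v (y i - y (cyc_prev m i)) = 0\<^sub>v (k i)" .
    show ?thesis
    proof (rule eq_vecI)
      fix j assume "j < dim_vec (C i *\<^sub>v y (cyc_prev m i))"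
      hence j: "j < k i" using Ci by simp
      have "(C i *\<^sub>v (y i - y (cyc_prev m i))) $ j = 0" using z j by simp
      moreover have "C i *\<^sub>v (y i - y (cyc_prev m i)) = C i *\<^sub>v y i - C i *\<^sub>v y (cyc_prev m i)"
        using mult_minus_distrib_mat_vec[OF Ci yi] .
      ultimately show "(C i *\<^sub>v y i) $ j = (C i *\<^sub>v y (cyc_prev m i)) $ j" using j Ci by simp
    qed (use Ci in simp)
  qed
  have all: "\<forall>i\<in>{1..m}. \<forall>j\<in>{1..m}. y i = y j"
    using assms(4) y Ceq unfolding well_configured_def by blast
  have one: "1 \<in> {1..m}" using m1 by simp
  have "\<forall>i\<in>{1..m}. y i = y 1" using all one by blast
  hence "\<exists>c>0. \<exists>\<rho>. 0 \<le> \<rho> \<and> \<rho> < 1 \<and> (\<forall>i\<in>{1..m}. \<forall>t. vnorm (x i t - y 1) \<le> c * \<rho> ^ t)"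
    using cb by (metis (no_types, lifting))
  moreover have "y 1 \<in> carrier_vec n" using y one by blast
  ultimately show ?thesis by blast
qed


end
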